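(* Let $r$ be a parameter and let $eF_r=(e_{n,k})_{n,k\ge0}$ be the $f$-matrix of the exponential Riordan array $\left[e^x, x(1+rx/2)\right]$, i.e. $eF_r=\left[e^x,x(1+rx/2)\right]\cdot\left[e^x,x\right]=\left[e^{2x+rx^2/2},x(1+rx/2)\right]$. Then the ordinary generating function (in $x$ and $y$) of the reversal of $eF_r$, $$\sum_{n\ge0}\sum_{k=0}^n e_{n,n-k}\,x^ny^k,$$ is given by the continued fraction $$\cfrac{1}{1-(2y+1)x- \cfrac{ry(y+1)x^2}{1-(2y+1)x- \cfrac{2ry(y+1)x^2}{1-(2y+1)x- \cfrac{3ry(y+1)x^2}{1-\cdots}}}},$$ that is, the Jacobi continued fraction whose $n$-th level has linear coefficient $2y+1$ and whose $n$-th quadratic coefficient is $n\,ry(y+1)$ ($n=1,2,3,\ldots$).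
   Context: An exponential Riordan array $[g(x),f(x)]$, where $g(x)=1+g_1\frac{x}{1!}+g_2\frac{x^2}{2!}+\cdots$ and $f(x)=\frac{x}{1!}+f_2\frac{x^2}{2!}+\cdots$, is the lower-triangular matrix $(a_{n,k})_{n,k\ge0}$ with $a_{n,k}=\frac{n!}{k!}[x^n]g(x)f(x)^k$; equivalently its bivariate generating function $\sum_{n,k}a_{n,k}\frac{x^n}{n!}y^k$ equals $g(x)e^{yf(x)}$. Products are matrix products; $[e^x,x]$ is the binomial matrix $\left(\binom{n}{k}\right)$. The $f$-matrix of a Pascal-like matrix $M$ is $M\cdot[e^x,x]$. The reversal of a lower-triangular matrix $(a_{n,k})$ has $(n,k)$ entry $a_{n,n-k}$ for $0\le k\le n$. A Jacobi continued fraction $\mathcal{J}(\alpha_1,\alpha_2,\ldots;\beta_1,\beta_2,\ldots)$ denotes the formal power series $\cfrac{1}{1-\alpha_1x-\cfrac{\beta_1x^2}{1-\alpha_2x-\cfrac{\beta_2x^2}{1-\cdots}}}$. *)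

theory Defs
  imports "HOL-Computational_Algebra.Formal_Power_Series"
begin

definition eRiordan :: "'a::field_char_0 fps \<Rightarrow> 'a fps \<Rightarrow> nat \<Rightarrow> nat \<Rightarrow> 'a" where
  "eRiordan g f n k = fact n / fact k * fps_nth (g * f ^ k) n"

definition ltmat_mult :: "(nat \<Rightarrow> nat \<Rightarrow> 'a::comm_semiring_1) \<Rightarrow> (nat \<Rightarrow> nat \<Rightarrow> 'a) \<Rightarrow> nat \<Rightarrow> nat \<Rightarrow> 'a" where
  "ltmat_mult A B n k = (\<Sum>j\<le>n. A n j * B j k)"

definition f_matrix :: "(nat \<Rightarrow> nat \<Rightarrow> 'a::field_char_0) \<Rightarrow> nat \<Rightarrow> nat \<Rightarrow> 'a" where
  "f_matrix M = ltmat_mult M (eRiordan (fps_exp 1) fps_X)"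

definition reversal :: "(nat \<Rightarrow> nat \<Rightarrow> 'a::zero) \<Rightarrow> nat \<Rightarrow> nat \<Rightarrow> 'a" where
  "reversal M n k = (if k \<le> n then M n (n - k) else 0)"

text \<open>Convergents of the Jacobi continued fraction J(alpha_1,...; beta_1,...):
  jfrac_tail alpha beta N i is the fraction starting at level i, truncated after N levels.\<close>
fun jfrac_tail :: "(nat \<Rightarrow> 'a::field) \<Rightarrow> (nat \<Rightarrow> 'a) \<Rightarrow> nat \<Rightarrow> nat \<Rightarrow> 'a fps" where
  "jfrac_tail \<alpha> \<beta> 0 i = 0"
| "jfrac_tail \<alpha> \<beta> (Suc N) i =
     inverse (1 - fps_const (\<alpha> i) * fps_X - fps_const (\<beta> i) * fps_X ^ 2 * jfrac_tail \<alpha> \<beta> N (Suc i))"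

definition jfrac_conv :: "(nat \<Rightarrow> 'a::field) \<Rightarrow> (nat \<Rightarrow> 'a) \<Rightarrow> nat \<Rightarrow> 'a fps" where
  "jfrac_conv \<alpha> \<beta> N = jfrac_tail \<alpha> \<beta> N 1"

text \<open>F is the value of the J-fraction: the convergents tend to F in the x-adic topology.\<close>
definition is_jfrac :: "(nat \<Rightarrow> 'a::field) \<Rightarrow> (nat \<Rightarrow> 'a) \<Rightarrow> 'a fps \<Rightarrow> bool" where
  "is_jfrac \<alpha> \<beta> F \<longleftrightarrow> (jfrac_conv \<alpha> \<beta> \<longlonglongrightarrow> F)"

end

theory Submission
  imports Defs
begin
unbundle fps_syntax


lemma prod_low_zero:
  fixes F G :: "'a::comm_semiring_1 fps"
  assumes "\<And>i. i < p \<Longrightarrow> F $ i = 0" "\<And>i. i < q \<Longrightarrow> G $ i = 0" "m < p + q"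
  shows "(F * G) $ m = 0"
  unfolding fps_mult_nth
proof (intro sum.neutral ballI)
  fix i assume i: "i \<in> {0..m}"
  show "F $ i * G $ (m - i) = 0"
  proof (cases "i < p")
    case True then show ?thesis using assms(1) by simp
  next
    case False then have "m - i < q" using assms(3) i by auto
    then show ?thesis using assms(2) by simp
  qed
qed

lemma inverse_agree:
  fixes P Q :: "'a::field fps"
  assumes "P $ 0 = 1" "Q $ 0 = 1" "\<And>i. i < K \<Longrightarrow> P $ i = Q $ i" "m < K"
  shows "inverse P $ m = inverse Q $ m"
proof -
  have "inverse P * inverse Q * (Q - P) = inverse P * (inverse Q * Q) - inverse Q * (inverse P * P)"
    by (simp add: algebra_simps)
  also have "\<dots> = inverse P - inverse Q"
    using assms(1,2) by (simp add: inverse_mult_eq_1)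
  finally have eq: "inverse P - inverse Q = inverse P * inverse Q * (Q - P)" by simp
  have "(inverse P * inverse Q * (Q - P)) $ m = 0"
    by (rule prod_low_zero[where p=0 and q=K]) (use assms in auto)
  then have "(inverse P - inverse Q) $ m = 0" by (simp only: eq)
  then show ?thesis by simp
qed

lemma conv_by_agree:
  fixes S :: "nat \<Rightarrow> 'a::group_add fps"
  assumes "\<And>N m. m < N \<Longrightarrow> S N $ m = F $ m"
  shows "S \<longlonglongrightarrow> F"
  unfolding lim_sequentially
proof (intro allI impI)
  fix r :: real assume "r > 0"
  obtain n0 where n0: "(1/2)^n0 < r"
    using reals_power_lt_ex[OF \<open>r > 0\<close>, of 2] by auto
  have "dist (S n) F < r" if "n \<ge> n0" for n
  proof (cases "S n = F")
    case True then show ?thesis using \<open>r > 0\<close> by simp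
  next
    case False
    then have "S n - F \<noteq> 0" by simp
    moreover have "\<And>i. i < n \<Longrightarrow> (S n - F) $ i = 0" using assms by simp
    ultimately have sd: "subdegree (S n - F) \<ge> n" by (rule subdegree_geI)
    have "dist (S n) F = inverse (2 ^ subdegree (S n - F))"
      using False by (simp add: dist_fps_def)
    also have "\<dots> \<le> inverse (2 ^ n)"
      using sd by (intro le_imp_inverse_le) (auto intro: power_increasing)
    also have "\<dots> = (1/2)^n" by (simp only: inverse_eq_divide power_one_over)
    also have "\<dots> \<le> (1/2)^n0" using that by (intro power_decreasing) auto
    finally show ?thesis using n0 by simp
  qed
  then show "\<exists>no. \<forall>n\<ge>no. dist (S n) F < r" by blast
qed

definition Eser :: "(nat \<Rightarrow> 'a::field_char_0) \<Rightarrow> nat \<Rightarrow> 'a fps" where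
  "Eser h j = Abs_fps (\<lambda>m. of_nat ((m + j - 1) choose m) * h m)"

lemma binom_aux: "(k+1) * ((k+j+1) choose (k+1)) = (j+1) * ((k+j+1) choose k)"
proof -
  have "(k+1) * ((k+j+1) choose (k+1)) = (k+j+1) * ((k+j) choose k)"
    using Suc_times_binomial_eq[of "k+j" k] by simp
  also have "\<dots> = (j+1) * ((k+j+1) choose k)"
    using binomial_absorb_comp[of "k+j+1" k] by simp
  finally show ?thesis .
qed

lemma c1: "Eser h (j+1) $ (k+2) = of_nat ((k+j+2) choose (k+2)) * h (k+2)"
  by (simp add: Eser_def)
lemma c2: "(fps_X * (fps_const a * Eser h (j+1))) $ (k+2) = a * (of_nat ((k+j+1) choose (k+1)) * h (k+1))"
  by (simp add: Eser_def)
lemma c3: "(fps_X^2 * (fps_const c * Eser h (j+2))) $ (k+2) = c * (of_nat ((k+j+1) choose k) * h k)"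
  by (simp add: Eser_def fps_X_power_mult_nth)
lemma c4: "Eser h j $ (k+2) = of_nat ((k+j+1) choose (k+2)) * h (k+2)"
  by (simp add: Eser_def)
lemma pas: "((k+j+2) choose (k+2)) = ((k+j+1) choose (k+2)) + ((k+j+1) choose (k+1))"
  using binomial_Suc_Suc[of "k+j+1" "k+1"] by simp
lemma Erec:
  fixes h :: "nat \<Rightarrow> 'a::field_char_0"
  assumes h0: "h 0 = 1" and h1: "h 1 = a"
    and hrec: "\<And>k. h (k+2) = a * h (k+1) + of_nat (k+1) * b * h k"
  shows "Eser h j = Eser h (j+1) - fps_X * (fps_const a * Eser h (j+1))
           - fps_X^2 * (fps_const (of_nat (j+1) * b) * Eser h (j+2))"
proof (rule fps_ext)
  fix m
  show "Eser h j $ m = (Eser h (j+1) - fps_X * (fps_const a * Eser h (j+1))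
           - fps_X^2 * (fps_const (of_nat (j+1) * b) * Eser h (j+2))) $ m"
  proof (cases m)
    case 0 then show ?thesis by (simp add: Eser_def h0 fps_X_power_mult_nth)
  next
    case (Suc m')
    show ?thesis
    proof (cases m')
      case 0
      have h1': "h (Suc 0) = a" using h1 by simp
      show ?thesis using Suc 0 by (simp add: Eser_def h0 h1' fps_X_power_mult_nth algebra_simps)
    next
      case (Suc k)
      have m: "m = k + 2" using \<open>m = Suc m'\<close> Suc by simp
      have bin0: "of_nat ((k+1) * ((k+j+1) choose (k+1))) = (of_nat ((j+1) * ((k+j+1) choose k)) :: 'a)"
        using binom_aux[of k j] by (simp only:)
      define A where "A = (of_nat ((k+j+1) choose (k+2)) :: 'a)"
      define B1 where "B1 = (of_nat ((k+j+1) choose (k+1)) :: 'a)"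
      define B0 where "B0 = (of_nat ((k+j+1) choose k) :: 'a)"
      have bin': "of_nat (k+1) * B1 = of_nat (j+1) * B0" using bin0 unfolding B1_def B0_def of_nat_mult .
      have "(Eser h (j+1) - fps_X * (fps_const a * Eser h (j+1))
           - fps_X^2 * (fps_const (of_nat (j+1) * b) * Eser h (j+2))) $ m
         = (A + B1) * h (k+2) - a * (B1 * h (k+1)) - of_nat (j+1) * b * (B0 * h k)"
        unfolding m fps_sub_nth c1 c2 c3 pas of_nat_add A_def B1_def B0_def by (simp only:)
      also have "\<dots> = A * h (k+2) + of_nat (k+1) * B1 * b * h k - of_nat (j+1) * b * (B0 * h k)"
        unfolding hrec by (simp add: algebra_simps)
      also have "of_nat (k+1) * B1 * b * h k = of_nat (j+1) * b * (B0 * h k)"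
        unfolding bin' by (simp only: mult_ac)
      also have "A * h (k+2) + of_nat (j+1) * b * (B0 * h k) - of_nat (j+1) * b * (B0 * h k) = A * h (k+2)"
        by simp
      also have "\<dots> = Eser h j $ m" unfolding m A_def c4 ..
      finally show ?thesis by (rule sym)
    qed
  qed
qed



lemma Eser_nth0: "h 0 = 1 \<Longrightarrow> Eser h j $ 0 = 1"
  by (simp add: Eser_def)

lemma Eser0: assumes "h 0 = 1" shows "Eser h 0 = 1"
proof (rule fps_ext)
  fix m show "Eser h 0 $ m = 1 $ m"
    by (cases m) (simp_all add: Eser_def assms)
qed

definition Tser :: "(nat \<Rightarrow> 'a::field_char_0) \<Rightarrow> nat \<Rightarrow> 'a fps" where
  "Tser h i = Eser h i * inverse (Eser h (i - 1))"

lemma Ttail: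
  fixes h :: "nat \<Rightarrow> 'a::field_char_0"
  assumes h0: "h 0 = 1" and h1: "h 1 = a"
    and hrec: "\<And>k. h (k+2) = a * h (k+1) + of_nat (k+1) * b * h k"
    and i: "i \<ge> 1"
  shows "Tser h i = inverse (1 - fps_const a * fps_X - fps_const (of_nat i * b) * fps_X^2 * Tser h (i+1))"
proof -
  obtain j where j: "i = j + 1" using i by (metis add.commute le_Suc_ex)
  define E0 where "E0 = Eser h j"
  define E1 where "E1 = Eser h (j+1)"
  define E2 where "E2 = Eser h (j+2)"
  define c where "c = (of_nat (j+1) * b :: 'a)"
  have rec: "E0 = E1 - fps_X * (fps_const a * E1) - fps_X^2 * (fps_const c * E2)"
    unfolding E0_def E1_def E2_def c_def by (rule Erec[OF h0 h1 hrec])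
  have inv1: "E1 * inverse E1 = 1" unfolding E1_def
    by (rule inverse_mult_eq_1') (simp add: Eser_nth0 h0)
  have "1 - fps_const a * fps_X - fps_const c * fps_X^2 * (E2 * inverse E1)
        = E1 * inverse E1 - fps_X * (fps_const a * E1) * inverse E1 - fps_X^2 * (fps_const c * E2) * inverse E1"
    using inv1 by (simp add: algebra_simps)
  also have "\<dots> = E0 * inverse E1" unfolding rec by (simp add: algebra_simps)
  finally have eq: "1 - fps_const a * fps_X - fps_const c * fps_X^2 * (E2 * inverse E1) = E0 * inverse E1" .
  have "inverse (E0 * inverse E1) = inverse E0 * E1"
    by (simp add: fps_inverse_mult E1_def Eser_nth0 h0)
  then have "inverse (1 - fps_const a * fps_X - fps_const c * fps_X^2 * (E2 * inverse E1)) = E1 * inverse E0"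
    using eq by (simp add: mult.commute)
  then show ?thesis unfolding Tser_def j E0_def E1_def E2_def c_def
    by (simp add: add.commute add.left_commute)
qed

lemma nth_cX2: fixes c :: "'a::comm_ring_1" shows "(fps_const c * fps_X^2 * F) $ k = (if k < 2 then 0 else c * F $ (k - 2))"
proof -
  have eq: "fps_const c * fps_X^2 * F = fps_X^2 * (fps_const c * F)" by (simp add: mult_ac)
  show ?thesis unfolding eq by (simp add: fps_X_power_mult_nth)
qed

lemma tail_agree:
  fixes h :: "nat \<Rightarrow> 'a::field_char_0"
  assumes h0: "h 0 = 1" and h1: "h 1 = a"
    and hrec: "\<And>k. h (k+2) = a * h (k+1) + of_nat (k+1) * b * h k"
    and al: "\<And>i. \<alpha> i = a" and be: "\<And>i. \<beta> i = of_nat i * b"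
  shows "i \<ge> 1 \<Longrightarrow> m < N \<Longrightarrow> jfrac_tail \<alpha> \<beta> N i $ m = Tser h i $ m"
proof (induction N arbitrary: i m)
  case 0 then show ?case by simp
next
  case (Suc N)
  have T: "Tser h i = inverse (1 - fps_const a * fps_X - fps_const (of_nat i * b) * fps_X^2 * Tser h (i+1))"
    by (rule Ttail[OF h0 h1 hrec Suc.prems(1)])
  define P where "P = 1 - fps_const a * fps_X - fps_const (of_nat i * b) * fps_X\<^sup>2 * jfrac_tail \<alpha> \<beta> N (Suc i)"
  define Q where "Q = 1 - fps_const a * fps_X - fps_const (of_nat i * b) * fps_X\<^sup>2 * Tser h (i + 1)"
  have ag: "P $ k = Q $ k" if k: "k < Suc N" for k
  proof (cases "k < 2")
    case True then show ?thesis unfolding P_def Q_def by (simp add: nth_cX2)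
  next
    case False
    then have "k - 2 < N" using k by simp
    then have "jfrac_tail \<alpha> \<beta> N (Suc i) $ (k-2) = Tser h (Suc i) $ (k-2)"
      using Suc.IH by simp
    then show ?thesis using False unfolding P_def Q_def by (simp add: nth_cX2)
  qed
  have P0: "P $ 0 = 1" unfolding P_def by (simp add: nth_cX2)
  have Q0: "Q $ 0 = 1" unfolding Q_def by (simp add: nth_cX2)
  have "inverse P $ m = inverse Q $ m"
    by (rule inverse_agree[OF P0 Q0 ag Suc.prems(2)])
  then show ?case unfolding jfrac_tail.simps T al be P_def Q_def .
qed

lemma jfrac_hermite:
  fixes h :: "nat \<Rightarrow> 'a::field_char_0"
  assumes h0: "h 0 = 1" and h1: "h 1 = a"
    and hrec: "\<And>k. h (k+2) = a * h (k+1) + of_nat (k+1) * b * h k"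
    and al: "\<And>i. \<alpha> i = a" and be: "\<And>i. \<beta> i = of_nat i * b"
  shows "is_jfrac \<alpha> \<beta> (Abs_fps h)"
proof -
  have T1: "Tser h 1 = Abs_fps h"
  proof -
    have "Tser h 1 = Eser h 1" by (simp add: Tser_def Eser0 h0)
    also have "\<dots> = Abs_fps h" by (simp add: Eser_def)
    finally show ?thesis .
  qed
  show ?thesis unfolding is_jfrac_def jfrac_conv_def
    by (rule conv_by_agree) (simp add: tail_agree[OF h0 h1 hrec al be] flip: T1)
qed



definition ff :: "'a::field_char_0 \<Rightarrow> 'a fps" where
  "ff r = fps_X * (1 + fps_const (r / 2) * fps_X)"
definition Ef :: "'a::field_char_0 \<Rightarrow> 'a fps" where
  "Ef r = fps_exp 1 oo ff r"
definition GG :: "'a::field_char_0 \<Rightarrow> 'a fps" where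
  "GG r = fps_exp 1 * Ef r"
definition Phi :: "'a::field_char_0 \<Rightarrow> nat \<Rightarrow> 'a fps" where
  "Phi r k = fps_const (1 / fact k) * GG r * ff r ^ k"
definition ee :: "'a::field_char_0 \<Rightarrow> nat \<Rightarrow> nat \<Rightarrow> 'a" where
  "ee r n k = fact n * Phi r k $ n"

lemma ff_nth0: "ff r $ 0 = 0" by (simp add: ff_def)

lemma ff_pow_low: assumes "m < i" shows "(ff r ^ i) $ m = 0"
proof -
  have "ff r ^ i = fps_X ^ i * (1 + fps_const (r / 2) * fps_X) ^ i"
    by (simp add: ff_def power_mult_distrib)
  then show ?thesis using assms by (simp add: fps_X_power_mult_nth)
qed

lemma deriv_ff: "fps_deriv (ff r) = 1 + fps_const r * fps_X"
proof (rule fps_ext)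
  fix n show "fps_deriv (ff r) $ n = (1 + fps_const r * fps_X) $ n"
  proof (cases n)
    case 0 then show ?thesis by (simp add: ff_def fps_X_nth)
  next
    case (Suc n') then show ?thesis by (cases n') (simp_all add: ff_def fps_X_nth algebra_simps fps_numeral_nth)
  qed
qed

lemma deriv_Ef: "fps_deriv (Ef r) = Ef r * (1 + fps_const r * fps_X)"
  unfolding Ef_def by (simp add: fps_compose_deriv ff_nth0 deriv_ff)

lemma deriv_GG: "fps_deriv (GG r) = (2 + fps_const r * fps_X) * GG r"
  unfolding GG_def by (simp add: deriv_Ef algebra_simps)

lemma GG0: "GG r $ 0 = 1"
  by (simp add: GG_def Ef_def)

lemma Phi_deriv0: "fps_deriv (Phi r 0) = (2 + fps_const r * fps_X) * Phi r 0"
  by (simp add: Phi_def deriv_GG)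

lemma Phi_derivS: "fps_deriv (Phi r (Suc k)) =
   (2 + fps_const r * fps_X) * Phi r (Suc k) + (1 + fps_const r * fps_X) * Phi r k"
proof -
  have c: "fps_const (1 / fact (Suc k)) * fps_const (of_nat (Suc k)) = (fps_const (1 / fact k) :: 'a fps)"
    by (simp add: fps_const_mult [symmetric] del: of_nat_Suc)
  have "fps_deriv (Phi r (Suc k)) = fps_const (1 / fact (Suc k)) *
      (fps_deriv (GG r) * ff r ^ Suc k + GG r * (fps_const (of_nat (Suc k)) * fps_deriv (ff r) * ff r ^ k))"
    unfolding Phi_def by (simp only: fps_deriv_mult fps_deriv_const fps_deriv_power diff_Suc_1 mult_zero_left mult_zero_right add_0 add_0_right mult.assoc add.commute)
  also have "\<dots> = (2 + fps_const r * fps_X) * Phi r (Suc k) +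
      (fps_const (1 / fact (Suc k)) * fps_const (of_nat (Suc k))) * GG r * fps_deriv (ff r) * ff r ^ k"
    unfolding Phi_def deriv_GG by (simp add: algebra_simps)
  also have "\<dots> = (2 + fps_const r * fps_X) * Phi r (Suc k) + (1 + fps_const r * fps_X) * Phi r k"
    unfolding c Phi_def deriv_ff by (simp add: algebra_simps)
  finally show ?thesis .
qed

lemma num2_nth: "((2::'a::comm_ring_1 fps) * F) $ n = 2 * F $ n"
  by (simp add: numeral_fps_const)
lemma nth_lin2: fixes F :: "'a::comm_ring_1 fps" shows "((2 + fps_const r * fps_X) * F) $ Suc n = 2 * F $ Suc n + r * F $ n"
  by (simp only: distrib_right mult.assoc fps_add_nth num2_nth fps_mult_left_const_nth fps_X_mult_nth) simp
lemma nth_lin1: fixes F :: "'a::comm_ring_1 fps" shows "((1 + fps_const r * fps_X) * F) $ Suc n = F $ Suc n + r * F $ n"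
  by (simp only: distrib_right mult.assoc fps_add_nth mult_1 fps_mult_left_const_nth fps_X_mult_nth) simp
lemma nth_lin2_0: fixes F :: "'a::comm_ring_1 fps" shows "((2 + fps_const r * fps_X) * F) $ 0 = 2 * F $ 0"
  by (simp add: algebra_simps num2_nth)
lemma nth_lin1_0: fixes F :: "'a::comm_ring_1 fps" shows "((1 + fps_const r * fps_X) * F) $ 0 = F $ 0"
  by (simp add: algebra_simps num2_nth)



lemma ee_low: assumes "n < k" shows "ee r n k = 0"
proof -
  have "(GG r * ff r ^ k) $ n = 0"
    by (rule prod_low_zero[where p=0 and q=k]) (use assms ff_pow_low in auto)
  then show ?thesis unfolding ee_def Phi_def by (simp add: mult.assoc)
qed

lemma Phi_nth0: "Phi r k $ 0 = (if k = 0 then 1 else 0)"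
  unfolding Phi_def by (simp add: mult.assoc GG0 ff_nth0 fps_nth_power_0)

lemma ee_0: "ee r 0 k = (if k = 0 then 1 else 0)"
  by (simp add: ee_def Phi_nth0)

lemma ee_1_0: "ee r 1 0 = 2"
proof -
  have "fps_deriv (Phi r 0) $ 0 = ((2 + fps_const r * fps_X) * Phi r 0) $ 0"
    by (simp only: Phi_deriv0)
  then show ?thesis by (simp add: ee_def nth_lin2_0 Phi_nth0)
qed

lemma ee_1_1: "ee r 1 1 = 1"
proof -
  have "fps_deriv (Phi r (Suc 0)) $ 0 = ((2 + fps_const r * fps_X) * Phi r (Suc 0) + (1 + fps_const r * fps_X) * Phi r 0) $ 0"
    by (simp only: Phi_derivS)
  then show ?thesis by (simp add: ee_def nth_lin2_0 nth_lin1_0 Phi_nth0)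
qed

lemma ee_rec0: "ee r (Suc (Suc m)) 0 = 2 * ee r (Suc m) 0 + of_nat (Suc m) * r * ee r m 0"
proof -
  have d: "fps_deriv (Phi r 0) $ Suc m = ((2 + fps_const r * fps_X) * Phi r 0) $ Suc m"
    by (simp only: Phi_deriv0)
  then have d': "of_nat (Suc (Suc m)) * Phi r 0 $ Suc (Suc m) = 2 * Phi r 0 $ Suc m + r * Phi r 0 $ m"
    by (simp only: fps_deriv_nth nth_lin2) simp
  have "ee r (Suc (Suc m)) 0 = fact (Suc m) * (of_nat (Suc (Suc m)) * Phi r 0 $ Suc (Suc m))"
    unfolding ee_def by (simp only: fact_Suc[of "Suc m"] mult_ac)
  also have "\<dots> = fact (Suc m) * (2 * Phi r 0 $ Suc m + r * Phi r 0 $ m)" by (simp only: d')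
  also have "\<dots> = 2 * ee r (Suc m) 0 + of_nat (Suc m) * r * ee r m 0"
    unfolding ee_def by (simp only: fact_Suc[of m]) (simp add: algebra_simps)
  finally show ?thesis .
qed

lemma ee_recS: "ee r (Suc (Suc m)) (Suc k) = 2 * ee r (Suc m) (Suc k) + of_nat (Suc m) * r * ee r m (Suc k)
    + ee r (Suc m) k + of_nat (Suc m) * r * ee r m k"
proof -
  have d: "fps_deriv (Phi r (Suc k)) $ Suc m = ((2 + fps_const r * fps_X) * Phi r (Suc k) + (1 + fps_const r * fps_X) * Phi r k) $ Suc m"
    by (simp only: Phi_derivS)
  then have d': "of_nat (Suc (Suc m)) * Phi r (Suc k) $ Suc (Suc m) = 2 * Phi r (Suc k) $ Suc m + r * Phi r (Suc k) $ m
      + (Phi r k $ Suc m + r * Phi r k $ m)"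
    by (simp only: fps_deriv_nth nth_lin2 nth_lin1 fps_add_nth) simp
  have "ee r (Suc (Suc m)) (Suc k) = fact (Suc m) * (of_nat (Suc (Suc m)) * Phi r (Suc k) $ Suc (Suc m))"
    unfolding ee_def by (simp only: fact_Suc[of "Suc m"] mult_ac)
  also have "\<dots> = fact (Suc m) * (2 * Phi r (Suc k) $ Suc m + r * Phi r (Suc k) $ m
      + (Phi r k $ Suc m + r * Phi r k $ m))" by (simp only: d')
  also have "\<dots> = 2 * ee r (Suc m) (Suc k) + of_nat (Suc m) * r * ee r m (Suc k)
    + ee r (Suc m) k + of_nat (Suc m) * r * ee r m k"
    unfolding ee_def by (simp only: fact_Suc[of m]) (simp add: algebra_simps)
  finally show ?thesis .
qed



lemma B_val: "eRiordan (fps_exp 1) fps_X j k =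
   (if k \<le> j then fact j / (fact k * fact (j - k)) else (0::'a::field_char_0))"
  unfolding eRiordan_def by (simp add: fps_X_power_mult_right_nth)

lemma S_agree:
  assumes "m \<le> N"
  shows "Ef r $ m = (\<Sum>i\<le>N. fps_const (1 / fact i) * ff r ^ i) $ m"
proof -
  have "Ef r $ m = (\<Sum>i\<in>{0..m}. 1 / fact i * (ff r ^ i) $ m)"
    unfolding Ef_def fps_compose_nth by simp
  also have "\<dots> = (\<Sum>i\<in>{..N}. 1 / fact i * (ff r ^ i) $ m)"
    by (rule sum.mono_neutral_left) (use assms in \<open>auto intro!: ff_pow_low\<close>)
  also have "\<dots> = (\<Sum>i\<le>N. fps_const (1 / fact i) * ff r ^ i) $ m"
    by (simp add: fps_sum_nth)
  finally show ?thesis .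
qed

lemma eF_val:
  assumes kn: "k \<le> n"
  shows "f_matrix (eRiordan (fps_exp 1) (ff r)) n k = ee r n k"
proof -
  define e :: "'a fps" where "e = fps_exp 1"
  define g where "g = (\<lambda>j. fact n / (fact k * fact (j - k)) * (e * ff r ^ j) $ n)"
  have "f_matrix (eRiordan (fps_exp 1) (ff r)) n k
      = (\<Sum>j\<le>n. (if k \<le> j then g j else 0))"
    unfolding f_matrix_def ltmat_mult_def B_val
    by (intro sum.cong refl) (auto simp: eRiordan_def g_def e_def)
  also have "\<dots> = (\<Sum>j\<in>{k..n}. g j)"
    by (subst sum.inter_filter[symmetric]) (auto intro!: sum.cong)
  also have "\<dots> = (\<Sum>i\<in>{0..n-k}. g (i + k))"
    using sum.shift_bounds_cl_nat_ivl[of g 0 k "n-k"] kn by simp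
  also have "\<dots> = fact n / fact k * (\<Sum>i\<le>n-k. 1 / fact i * (e * ff r ^ k * ff r ^ i) $ n)"
    unfolding g_def sum_distrib_left atLeast0AtMost
    by (intro sum.cong refl) (simp add: power_add mult_ac)
  also have "\<dots> = fact n / fact k * (e * ff r ^ k * (\<Sum>i\<le>n-k. fps_const (1 / fact i) * ff r ^ i)) $ n"
  proof -
    have "e * ff r ^ k * (\<Sum>i\<le>n-k. fps_const (1 / fact i) * ff r ^ i)
        = (\<Sum>i\<le>n-k. fps_const (1 / fact i) * (e * ff r ^ k * ff r ^ i))"
      by (simp add: sum_distrib_left mult_ac)
    then show ?thesis by (simp add: fps_sum_nth)
  qed
  also have "(e * ff r ^ k * (\<Sum>i\<le>n-k. fps_const (1 / fact i) * ff r ^ i)) $ n = (e * ff r ^ k * Ef r) $ n"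
  proof -
    define D where "D = Ef r - (\<Sum>i\<le>n-k. fps_const (1 / fact i) * ff r ^ i)"
    have D0: "D $ m = 0" if "m < Suc (n - k)" for m
      unfolding D_def using S_agree[of m "n-k" r] that by simp
    have "(ff r ^ k * D) $ m = 0" if "m < k + Suc (n - k)" for m
      by (rule prod_low_zero[where p=k and q="Suc (n-k)"]) (use D0 ff_pow_low that in auto)
    then have "(e * (ff r ^ k * D)) $ n = 0"
      using prod_low_zero[of 0 e "Suc n" "ff r ^ k * D" n] kn by auto
    then show ?thesis unfolding D_def by (simp add: algebra_simps)
  qed
  also have "fact n / fact k * (e * ff r ^ k * Ef r) $ n = ee r n k"
  proof -
    have "fps_const (1 / fact k) * (fps_exp 1 * Ef r) * ff r ^ k = fps_const (1 / fact k) * (e * ff r ^ k * Ef r)"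
      unfolding e_def by (simp add: mult_ac)
    then show ?thesis unfolding ee_def Phi_def GG_def by (simp only:) (simp only: fps_mult_left_const_nth, simp)
  qed
  finally show ?thesis .
qed



definition qq :: "'a::field_char_0 \<Rightarrow> nat \<Rightarrow> nat \<Rightarrow> 'a" where
  "qq r n j = (if j \<le> n then ee r n (n - j) else 0)"
definition sh :: "(nat \<Rightarrow> 'a::zero) \<Rightarrow> nat \<Rightarrow> 'a" where
  "sh g j = (case j of 0 \<Rightarrow> 0 | Suc i \<Rightarrow> g i)"
definition cs :: "'a::field_char_0 \<Rightarrow> 'a \<Rightarrow> nat \<Rightarrow> 'a" where
  "cs r y n = (\<Sum>j\<le>n. qq r n j * y ^ j)"

lemma cs_ext: assumes "n \<le> M" shows "cs r y n = (\<Sum>j\<le>M. qq r n j * y ^ j)"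
  unfolding cs_def by (rule sum.mono_neutral_left) (use assms in \<open>auto simp: qq_def\<close>)

lemma sh_sum: "(\<Sum>j\<le>Suc M. sh g j * y ^ j) = y * (\<Sum>j\<le>M. g j * (y::'a::comm_ring_1) ^ j)"
  unfolding sum.atMost_Suc_shift by (simp add: sh_def sum_distrib_left mult_ac)

lemma qrec: "qq r (Suc (Suc m)) j = qq r (Suc m) j + 2 * sh (qq r (Suc m)) j
   + of_nat (Suc m) * r * (sh (qq r m) j + sh (sh (qq r m)) j)"
proof (cases j)
  case 0
  then show ?thesis using ee_recS[of r m "Suc m"]
    by (simp add: qq_def sh_def ee_low)
next
  case (Suc j')
  show ?thesis
  proof (cases j')
    case 0
    then show ?thesis using Suc ee_recS[of r m m]
      by (simp add: qq_def sh_def ee_low)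
  next
    case (Suc i)
    have j: "j = Suc (Suc i)" using \<open>j = Suc j'\<close> Suc by simp
    show ?thesis
    proof (cases "i \<le> m")
      case True
      then obtain d where m: "m = i + d" using le_Suc_ex by blast
      show ?thesis
      proof (cases d)
        case 0
        then show ?thesis unfolding j m using ee_rec0[of r i]
          by (simp add: qq_def sh_def ee_low)
      next
        case (Suc d')
        have e: "Suc (Suc (i + Suc d')) - Suc (Suc i) = Suc d'" "Suc (i + Suc d') - Suc (Suc i) = d'"
          "Suc (i + Suc d') - Suc i = Suc d'" "i + Suc d' - Suc i = d'" "i + Suc d' - i = Suc d'" by simp_all
        show ?thesis unfolding j m Suc using ee_recS[of r "i + Suc d'" d']
          by (simp add: qq_def sh_def e distrib_left)
      qed
    next
      case False
      then show ?thesis unfolding j by (simp add: qq_def sh_def)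
    qed
  qed
qed

lemma cs_rec: "cs r y (Suc (Suc m)) = (2 * y + 1) * cs r y (Suc m) + of_nat (Suc m) * (r * y * (y + 1)) * cs r y m"
proof -
  have "cs r y (Suc (Suc m)) = (\<Sum>j\<le>Suc (Suc m). qq r (Suc m) j * y ^ j)
      + 2 * (\<Sum>j\<le>Suc (Suc m). sh (qq r (Suc m)) j * y ^ j)
      + of_nat (Suc m) * r * ((\<Sum>j\<le>Suc (Suc m). sh (qq r m) j * y ^ j) + (\<Sum>j\<le>Suc (Suc m). sh (sh (qq r m)) j * y ^ j))"
    unfolding cs_def qrec by (simp add: sum.distrib sum_distrib_left algebra_simps)
  also have "(\<Sum>j\<le>Suc (Suc m). qq r (Suc m) j * y ^ j) = cs r y (Suc m)"
    by (rule cs_ext[symmetric]) simp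
  also have "(\<Sum>j\<le>Suc (Suc m). sh (qq r (Suc m)) j * y ^ j) = y * cs r y (Suc m)"
    unfolding sh_sum cs_def ..
  also have "(\<Sum>j\<le>Suc (Suc m). sh (qq r m) j * y ^ j) = y * cs r y m"
    unfolding sh_sum using cs_ext[of m "Suc m" r y] by simp
  also have "(\<Sum>j\<le>Suc (Suc m). sh (sh (qq r m)) j * y ^ j) = y * (y * cs r y m)"
    unfolding sh_sum cs_def ..
  finally show ?thesis by (simp add: algebra_simps)
qed

lemma cs_0: "cs r y 0 = 1"
  by (simp add: cs_def qq_def ee_0)

lemma cs_1: "cs r y 1 = 2 * y + 1"
proof -
  have a: "ee r (Suc 0) 0 = 2" "ee r (Suc 0) (Suc 0) = 1" using ee_1_0[of r] ee_1_1[of r] by simp_all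
  show ?thesis by (simp add: cs_def qq_def a)
qed

theorem proposition3:
  fixes r y :: "'a::field_char_0"
  defines "eF \<equiv> f_matrix (eRiordan (fps_exp 1) (fps_X * (1 + fps_const (r / 2) * fps_X)))"
  shows "is_jfrac (\<lambda>i. 2 * y + 1) (\<lambda>i. of_nat i * r * y * (y + 1))
           (Abs_fps (\<lambda>n. \<Sum>k\<le>n. reversal eF n k * y ^ k))"
proof -
  have fn: "(\<lambda>n. \<Sum>k\<le>n. reversal eF n k * y ^ k) = cs r y"
  proof
    fix n
    show "(\<Sum>k\<le>n. reversal eF n k * y ^ k) = cs r y n"
      unfolding cs_def
    proof (intro sum.cong refl)
      fix k assume "k \<in> {..n}"
      then have "k \<le> n" by simp
      then show "reversal eF n k * y ^ k = qq r n k * y ^ k"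
        unfolding reversal_def qq_def eF_def using eF_val[of "n - k" n r]
        by (simp add: ff_def)
    qed
  qed
  have hrec: "\<And>k. cs r y (k+2) = (2 * y + 1) * cs r y (k+1) + of_nat (k+1) * (r * y * (y + 1)) * cs r y k"
    using cs_rec by simp
  show ?thesis unfolding fn
    by (rule jfrac_hermite[OF cs_0 cs_1 hrec]) (simp_all add: mult.assoc)
qed


end
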